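(* In a discrete Dubins path, an inflection edge can be adjacent only to a non-inflection normal edge.
   Context: Fix an angle $\theta$ with $0\le\theta\le\pi/2$ such that $2\pi/\theta$ is an integer, and a length $\ell>0$. For a polygonal path, the turn at an internal vertex is the angle in $[0,\pi]$ between the direction of the incoming edge and the direction of the outgoing edge. An edge is short if its length is $<\ell$, normal if $=\ell$, long if $>\ell$. An edge $e$ with an adjacent edge at each end is an inflection edge if its two adjacent edges lie on opposite sides of the supporting line of $e$ (equivalently, the path turns in opposite directions at the two endpoints of $e$), and non-inflection otherwise. A discrete curvature-constrained path is a polygonal path such that: (i) the turn at every internal vertex is at most $\theta$; (ii) no two adjacent edges are both short; (iii) for every short non-inflection edge $ab$ with adjacent edges $a^-a$ and $bb^+$, the angle between the directions $\overrightarrow{a^-a}$ and $\overrightarrow{bb^+}$ is at most $\theta$. A configuration is a pair $(u,U)$ of a point $u$ and a vector $U$ of length $\ell$. A polygonal path $P$ with first vertex $u$ starts at $(u,U)$ if prepending the segment from $u-U$ to $u$ (the pre-edge) yields a discrete curvature-constrained path; $P$ with last vertex $v$ ends at $(v,V)$ if appending the segment from $v$ to $v+V$ (the post-edge) yields a discrete curvature-constrained path. A discrete Dubins path is a discrete curvature-constrained path of minimum length among all those starting at a given configuration $\mathcal U$ and ending at a given configuration $\mathcal V$. Standing assumption: paths make a non-zero turn at every internal vertex. *)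

theory Defs
  imports "HOL-Analysis.Analysis"
begin

text \<open>Points of the plane are complex numbers. A polygonal path is the nonempty list
  of its vertices; edge i goes from vertex i to vertex i+1.\<close>

definition nedges :: "complex list \<Rightarrow> nat" where
  "nedges xs = length xs - 1"

definition edir :: "complex list \<Rightarrow> nat \<Rightarrow> complex" where
  "edir xs i = xs ! Suc i - xs ! i"

definition dir_angle :: "complex \<Rightarrow> complex \<Rightarrow> real" where
  "dir_angle a b = arccos (inner a b / (norm a * norm b))"

text \<open>Signed cross product: positive for a left turn from a to b, negative for right.\<close>
definition cross :: "complex \<Rightarrow> complex \<Rightarrow> real" where
  "cross a b = Im (cnj a * b)"

definition short_edge :: "real \<Rightarrow> complex list \<Rightarrow> nat \<Rightarrow> bool" where
  "short_edge l xs i \<longleftrightarrow> norm (edir xs i) < l"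

definition normal_edge :: "real \<Rightarrow> complex list \<Rightarrow> nat \<Rightarrow> bool" where
  "normal_edge l xs i \<longleftrightarrow> norm (edir xs i) = l"

definition long_edge :: "real \<Rightarrow> complex list \<Rightarrow> nat \<Rightarrow> bool" where
  "long_edge l xs i \<longleftrightarrow> norm (edir xs i) > l"

definition has_both_neighbours :: "complex list \<Rightarrow> nat \<Rightarrow> bool" where
  "has_both_neighbours xs i \<longleftrightarrow> 0 < i \<and> Suc i < nedges xs"

text \<open>The two adjacent edges lie strictly on opposite sides of the supporting line,
  i.e. the path turns in opposite directions at the two endpoints.\<close>
definition inflection_edge :: "complex list \<Rightarrow> nat \<Rightarrow> bool" where
  "inflection_edge xs i \<longleftrightarrow> has_both_neighbours xs i \<and>
     cross (edir xs (i - 1)) (edir xs i) * cross (edir xs i) (edir xs (Suc i)) < 0"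

definition non_inflection_edge :: "complex list \<Rightarrow> nat \<Rightarrow> bool" where
  "non_inflection_edge xs i \<longleftrightarrow> has_both_neighbours xs i \<and> \<not> inflection_edge xs i"

definition dcc_path :: "real \<Rightarrow> real \<Rightarrow> complex list \<Rightarrow> bool" where
  "dcc_path \<theta> l xs \<longleftrightarrow>
     xs \<noteq> [] \<and>
     (\<forall>i < nedges xs. edir xs i \<noteq> 0) \<and>
     (\<forall>j. 0 < j \<and> j < nedges xs \<longrightarrow> dir_angle (edir xs (j - 1)) (edir xs j) \<le> \<theta>) \<and>
     (\<forall>i. Suc i < nedges xs \<longrightarrow> \<not> (short_edge l xs i \<and> short_edge l xs (Suc i))) \<and>
     (\<forall>i. short_edge l xs i \<and> non_inflection_edge xs i \<longrightarrow>
           dir_angle (edir xs (i - 1)) (edir xs (Suc i)) \<le> \<theta>)"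

definition path_length :: "complex list \<Rightarrow> real" where
  "path_length xs = (\<Sum>i < nedges xs. norm (edir xs i))"

definition starts_at :: "real \<Rightarrow> real \<Rightarrow> complex list \<Rightarrow> complex \<Rightarrow> complex \<Rightarrow> bool" where
  "starts_at \<theta> l xs u U \<longleftrightarrow> xs \<noteq> [] \<and> hd xs = u \<and> dcc_path \<theta> l ((u - U) # xs)"

definition ends_at :: "real \<Rightarrow> real \<Rightarrow> complex list \<Rightarrow> complex \<Rightarrow> complex \<Rightarrow> bool" where
  "ends_at \<theta> l xs v V \<longleftrightarrow> xs \<noteq> [] \<and> last xs = v \<and> dcc_path \<theta> l (xs @ [v + V])"

definition discrete_dubins_path ::
  "real \<Rightarrow> real \<Rightarrow> complex \<Rightarrow> complex \<Rightarrow> complex \<Rightarrow> complex \<Rightarrow> complex list \<Rightarrow> bool" where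
  "discrete_dubins_path \<theta> l u U v V P \<longleftrightarrow>
     dcc_path \<theta> l P \<and> starts_at \<theta> l P u U \<and> ends_at \<theta> l P v V \<and>
     (\<forall>Q. dcc_path \<theta> l Q \<and> starts_at \<theta> l Q u U \<and> ends_at \<theta> l Q v V \<longrightarrow>
          path_length P \<le> path_length Q)"

definition extended_path :: "complex list \<Rightarrow> complex \<Rightarrow> complex \<Rightarrow> complex list" where
  "extended_path P U V = (hd P - U) # P @ [last P + V]"

definition nonzero_turns :: "complex list \<Rightarrow> bool" where
  "nonzero_turns xs \<longleftrightarrow> (\<forall>j. 0 < j \<and> j < nedges xs \<longrightarrow> dir_angle (edir xs (j - 1)) (edir xs j) \<noteq> 0)"

end

theory Submission
  imports Defs
begin



lemma cross_alt: "cross a b = Re a * Im b - Im a * Re b"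
  by (simp add: cross_def)

lemma inner_alt: "inner a (b::complex) = Re a * Re b + Im a * Im b"
  by (simp add: inner_complex_def)

lemma key_identity:
  "(cmod y)^2 * inner x z - inner x y * inner y z = cross y x * cross y z"
  by (simp only: cross_alt inner_alt cmod_power2) algebra

definition cosang :: "complex \<Rightarrow> complex \<Rightarrow> real" where
  "cosang a b = inner a b / (cmod a * cmod b)"

lemma cosang_bounds: "\<bar>cosang a b\<bar> \<le> 1"
proof (cases "a = 0 \<or> b = 0")
  case True then show ?thesis by (auto simp: cosang_def)
next
  case False
  hence p: "cmod a * cmod b > 0" by simp
  have "\<bar>inner a b\<bar> \<le> cmod a * cmod b" by (rule Cauchy_Schwarz_ineq2)
  hence "\<bar>inner a b\<bar> / (cmod a * cmod b) \<le> 1" using p by (simp only: divide_le_eq_1_pos)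
  thus ?thesis using p unfolding cosang_def by (simp only: abs_divide abs_of_pos)
qed

lemma dir_angle_cosang: "dir_angle a b = arccos (cosang a b)"
  unfolding dir_angle_def cosang_def by (rule refl)

lemma dir_angle_le_iff:
  assumes "0 \<le> th" "th \<le> pi"
  shows "dir_angle a b \<le> th \<longleftrightarrow> cos th \<le> cosang a b"
proof -
  have e: "arccos (cos th) = th" using assms by (rule arccos_cos)
  have "arccos (cosang a b) \<le> arccos (cos th) \<longleftrightarrow> cos th \<le> cosang a b"
    using cosang_bounds[of a b] abs_cos_le_one[of th] by (rule arccos_le_mono)
  thus ?thesis unfolding e dir_angle_cosang .
qed

lemma dir_angle_lt_iff:
  assumes "0 \<le> th" "th \<le> pi"
  shows "dir_angle a b < th \<longleftrightarrow> cos th < cosang a b"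
proof -
  have e: "arccos (cos th) = th" using assms by (rule arccos_cos)
  have "arccos (cosang a b) < arccos (cos th) \<longleftrightarrow> cos th < cosang a b"
    using cosang_bounds[of a b] abs_cos_le_one[of th] by (rule arccos_less_mono)
  thus ?thesis unfolding e dir_angle_cosang .
qed

lemma dir_angle_sym: "dir_angle a b = dir_angle b a"
  unfolding dir_angle_def by (simp only: inner_commute[of a b] mult.commute[of "cmod a"])

lemma X: "c > 0 \<Longrightarrow> inner a (complex_of_real c * b) = c * inner a b" by (simp add: inner_alt algebra_simps)
lemma Y: "c > 0 \<Longrightarrow> cmod a * cmod (complex_of_real c * b) = c * (cmod a * cmod b)" by (simp add: norm_mult)
lemma dir_angle_scale_right: "c > 0 \<Longrightarrow> dir_angle a (of_real c * b) = dir_angle a b"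
proof -
  assume c: "c > 0"
  have "inner a (of_real c * b) / (cmod a * cmod (of_real c * b)) = (c * inner a b) / (c * (cmod a * cmod b))"
    using X[OF c] Y[OF c] by metis
  also have "\<dots> = inner a b / (cmod a * cmod b)" using c by simp
  finally show ?thesis unfolding dir_angle_def by simp
qed

lemma dir_angle_scale_left: "c > 0 \<Longrightarrow> dir_angle (of_real c * a) b = dir_angle a b"
  by (metis dir_angle_scale_right dir_angle_sym)

lemma inner_nonneg_of_angle:
  assumes "dir_angle a b \<le> th" "0 \<le> th" "th \<le> pi/2"
  shows "inner a b \<ge> 0"
proof -
  have "cos th \<le> cosang a b" using assms(1) dir_angle_le_iff[of th a b] assms(2,3) by simp
  moreover have "cos th \<ge> 0" using assms by (intro cos_ge_zero) auto
  ultimately have cp: "cosang a b \<ge> 0" by linarith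
  show ?thesis
  proof (cases "a = 0 \<or> b = 0")
    case True thus ?thesis by auto
  next
    case False
    hence p: "cmod a * cmod b > 0" by simp
    have "inner a b = cosang a b * (cmod a * cmod b)" unfolding cosang_def using p
      by (simp only: times_divide_eq_left nonzero_mult_div_cancel_right[OF less_imp_neq[OF p, symmetric]])
    thus ?thesis using p cp mult_nonneg_nonneg[of "cosang a b" "cmod a * cmod b"] by linarith
  qed
qed




lemma real_core:
  fixes A B E Z N M t :: real
  assumes "A > 0" "N > 0" "M > 0" "M^2 = N^2 + 2*t*E + t^2*Z" "0 < t"
    "0 < 2*A*(N^2*B - A*E) + t*(B^2*N^2 - A^2*Z)" "A + t*B > 0"
  shows "A * M < (A + t*B) * N"
proof -
  have "((A + t*B) * N)^2 - (A*M)^2 = t * (2*A*(N^2*B - A*E) + t*(B^2*N^2 - A^2*Z))"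
    using assms(4) by (simp add: power2_eq_square algebra_simps)
  also have "\<dots> > 0" using assms by simp
  finally have "(A*M)^2 < ((A + t*B) * N)^2" by simp
  thus ?thesis by (rule power2_less_imp_less) (use assms in simp)
qed

lemma real_frac:
  fixes X N M A P :: real
  assumes "X > 0" "N > 0" "M > 0" "A * M \<le> P * N"
  shows "A / (X*N) \<le> P / (X*M)"
  using assms by (simp add: divide_simps mult.commute mult.left_commute)

lemma norm_sq_lin: "(cmod (y + complex_of_real t * z))^2 = (cmod y)^2 + 2*t*inner y z + t^2*(cmod z)^2"
  by (simp only: cmod_power2 inner_alt plus_complex.sel times_complex.sel Re_complex_of_real Im_complex_of_real)
     (simp add: power2_eq_square algebra_simps)

lemma inner_lin: "inner x (y + complex_of_real t * z) = inner x y + t * inner x z"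
  by (simp only: inner_alt plus_complex.sel times_complex.sel Re_complex_of_real Im_complex_of_real)
     (simp add: algebra_simps)

lemma lin_tendsto: "((\<lambda>t. y + complex_of_real t * z) \<longlongrightarrow> y) (at_right 0)"
proof -
  have "((\<lambda>t. y + complex_of_real t * z) \<longlongrightarrow> y + complex_of_real 0 * z) (at_right 0)"
    by (intro tendsto_intros)
  thus ?thesis by simp
qed

lemma cosang_tendsto:
  assumes "x \<noteq> 0" "y \<noteq> 0"
  shows "((\<lambda>t. cosang x (y + complex_of_real t * z)) \<longlongrightarrow> cosang x y) (at_right 0)"
  unfolding cosang_def using assms
  by (intro tendsto_intros lin_tendsto) auto

lemma angle_eventually:
  fixes x y z :: complex and th :: real
  assumes x: "x \<noteq> 0" and y: "y \<noteq> 0" and th0: "0 \<le> th" and th1: "th \<le> pi/2"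
    and le: "dir_angle x y \<le> th"
    and alt: "dir_angle x y < th \<or> cross y x * cross y z > 0"
  shows "eventually (\<lambda>t. dir_angle x (y + complex_of_real t * z) \<le> th) (at_right 0)"
proof -
  have thpi: "th \<le> pi" using th1 pi_gt_zero by linarith
  have lim: "((\<lambda>t. cosang x (y + complex_of_real t * z)) \<longlongrightarrow> cosang x y) (at_right 0)"
    using cosang_tendsto[OF x y] .
  have c0: "cos th \<le> cosang x y" using le dir_angle_le_iff[OF th0 thpi] by simp
  show ?thesis
  proof (cases "dir_angle x y < th")
    case True
    hence "cos th < cosang x y" using dir_angle_lt_iff[OF th0 thpi] by simp
    hence "eventually (\<lambda>t. cos th < cosang x (y + complex_of_real t * z)) (at_right 0)"
      by (rule order_tendstoD(1)[OF lim])
    thus ?thesis by eventually_elim (use dir_angle_le_iff[OF th0 thpi] in simp)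
  next
    case False
    hence cr: "cross y x * cross y z > 0" using alt by simp
    define A where "A = inner x y"
    define B where "B = inner x z"
    define E where "E = inner y z"
    define N where "N = cmod y"
    define Z where "Z = (cmod z)^2"
    define X where "X = cmod x"
    have A0: "A \<ge> 0" unfolding A_def using inner_nonneg_of_angle[OF le th0 th1] .
    have N0: "N > 0" unfolding N_def using y by simp
    have X0: "X > 0" unfolding X_def using x by simp
    have D: "N^2 * B - A * E > 0" unfolding N_def A_def B_def E_def using key_identity[of y x z] cr by simp
    have ct: "cosang x (y + complex_of_real t * z) = (A + t * B) / (X * cmod (y + complex_of_real t * z))" for t
      unfolding cosang_def A_def B_def X_def inner_lin ..
    have cy: "cosang x y = A / (X * N)" unfolding cosang_def A_def X_def N_def ..
    have Msq: "(cmod (y + complex_of_real t * z))^2 = N^2 + 2*t*E + t^2*Z" for t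
      unfolding N_def E_def Z_def by (rule norm_sq_lin)
    have ev: "eventually (\<lambda>t. cosang x y \<le> cosang x (y + complex_of_real t * z)) (at_right 0)"
    proof (cases "A = 0")
      case True
      hence "B > 0" using D N0 by (simp add: zero_less_mult_iff)
      hence "eventually (\<lambda>t. t > 0) (at_right (0::real))" by (simp add: eventually_at_right_less)
      thus ?thesis
      proof eventually_elim
        case (elim t)
        have "0 \<le> (A + t * B) / (X * cmod (y + complex_of_real t * z))"
          using True \<open>B > 0\<close> elim X0 by simp
        thus ?case unfolding ct cy True by simp
      qed
    next
      case False
      hence Ap: "A > 0" using A0 by simp
      have l1: "((\<lambda>t. A + t * B) \<longlongrightarrow> A + 0 * B) (at_right 0)" by (intro tendsto_intros)
      have e1: "eventually (\<lambda>t. A + t * B > 0) (at_right 0)"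
        using order_tendstoD(1)[OF l1] Ap by simp
      have l2: "((\<lambda>t. 2*A*(N^2*B - A*E) + t*(B^2*N^2 - A^2*Z)) \<longlongrightarrow> 2*A*(N^2*B - A*E) + 0*(B^2*N^2 - A^2*Z)) (at_right 0)"
        by (intro tendsto_intros)
      have e2: "eventually (\<lambda>t. 2*A*(N^2*B - A*E) + t*(B^2*N^2 - A^2*Z) > 0) (at_right 0)"
        using order_tendstoD(1)[OF l2] Ap D by simp
      have l3: "((\<lambda>t. cmod (y + complex_of_real t * z)) \<longlongrightarrow> cmod y) (at_right 0)"
        by (intro tendsto_intros lin_tendsto)
      have e3: "eventually (\<lambda>t. cmod (y + complex_of_real t * z) > 0) (at_right 0)"
        using order_tendstoD(1)[OF l3, of 0] y by simp
      have e4: "eventually (\<lambda>t. t > 0) (at_right (0::real))" by (simp add: eventually_at_right_less)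
      show ?thesis using e1 e2 e3 e4
      proof eventually_elim
        case (elim t)
        have "A * cmod (y + complex_of_real t * z) < (A + t * B) * N"
          by (rule real_core[OF Ap N0 elim(3) Msq elim(4) elim(2) elim(1)])
        hence "A / (X * N) \<le> (A + t * B) / (X * cmod (y + complex_of_real t * z))"
          by (intro real_frac X0 N0 elim(3)) simp
        thus ?case unfolding ct cy .
      qed
    qed
    show ?thesis using ev by eventually_elim (use c0 dir_angle_le_iff[OF th0 thpi] in simp)
  qed
qed




lemma cross_lin: "cross w (y + complex_of_real t * z) = cross w y + t * cross w z"
  by (simp only: cross_alt plus_complex.sel times_complex.sel Re_complex_of_real Im_complex_of_real)
     (simp add: algebra_simps)

lemma cross_lin_left: "cross (y + complex_of_real t * z) w = cross y w + t * cross z w"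
  by (simp only: cross_alt plus_complex.sel times_complex.sel Re_complex_of_real Im_complex_of_real)
     (simp add: algebra_simps)

lemma cross_scale_left: "cross (complex_of_real c * a) b = c * cross a b"
  by (simp only: cross_alt times_complex.sel Re_complex_of_real Im_complex_of_real) (simp add: algebra_simps)

lemma cross_scale_right: "cross a (complex_of_real c * b) = c * cross a b"
  by (simp only: cross_alt times_complex.sel Re_complex_of_real Im_complex_of_real) (simp add: algebra_simps)

lemma cross_self: "cross a a = 0"
  by (simp only: cross_alt) simp

lemma cross_antisym: "cross a b = - cross b a"
  by (simp only: cross_alt) simp

lemma cross_neg: "cross (-a) (-b) = cross a b"
  by (simp add: cross_alt)

lemma inner_neg2: "inner (-a) (-b::complex) = inner a b"
  by simp

lemma ident1: "(cmod y)^2 * cross x z = cross x y * inner y z + inner x y * cross y z"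
  by (simp only: cross_alt inner_alt cmod_power2) algebra

lemma ident2: "(cmod y)^2 * inner x z = inner x y * inner y z - cross x y * cross y z"
  by (simp only: cross_alt inner_alt cmod_power2) algebra

lemma ident3: "(cmod y)^2 * (cmod z)^2 = (inner y z)^2 + (cross y z)^2"
  by (simp only: cross_alt inner_alt cmod_power2) algebra

lemma signsum_real:
  fixes Y Z P Q c1 c2 e1 e2 :: real
  assumes "Y > 0" "Z > 0" "Y*P = c1*e2 + e1*c2" "Y*Q = e1*e2 - c1*c2" "Y*Z = e2^2 + c2^2"
    "c1 \<noteq> 0" "c1*c2 \<ge> 0" "e1 \<ge> 0" "e2 \<ge> 0" "Q \<ge> 0"
  shows "P * c1 > 0"
proof (cases "e2 = 0")
  case True
  hence "c2^2 = Y*Z" using assms(5) by simp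
  moreover have "Y*Z > 0" using assms(1,2) by simp
  ultimately have "c2^2 > 0" by simp
  hence "c2 \<noteq> 0" by auto
  hence cc: "c1 * c2 > 0" using assms(6,7) by (simp add: less_le)
  have "e1 \<noteq> 0"
  proof
    assume "e1 = 0"
    hence "Y * Q < 0" using assms(4) cc by simp
    thus False using assms(1,10) by (simp add: mult_less_0_iff)
  qed
  hence e1p: "e1 > 0" using assms(8) by simp
  have eq: "Y * (P * c1) = e1 * (c1 * c2)" using assms(3) True by (simp add: algebra_simps)
  have "Y * (P * c1) > 0" using eq e1p cc mult_pos_pos[of e1 "c1*c2"] by linarith
  thus ?thesis using assms(1) by (simp add: zero_less_mult_iff)
next
  case False
  hence e2p: "e2 > 0" using assms(9) by simp
  have "Y * (P * c1) = (Y*P) * c1" by (simp add: algebra_simps)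
  also have "\<dots> = c1^2 * e2 + e1 * (c1 * c2)" unfolding assms(3) by (simp add: algebra_simps power2_eq_square)
  finally have "Y * (P * c1) = c1^2 * e2 + e1 * (c1 * c2)" .
  moreover have "c1^2 * e2 > 0" using assms(6) e2p by simp
  moreover have "e1 * (c1 * c2) \<ge> 0" using assms(7,8) by simp
  ultimately have "Y * (P * c1) > 0" by linarith
  thus ?thesis using assms(1) by (simp add: zero_less_mult_iff)
qed

lemma signsum1:
  assumes "y \<noteq> 0" "z \<noteq> 0" "cross x y \<noteq> 0" "cross x y * cross y z \<ge> 0"
    "inner x y \<ge> 0" "inner y z \<ge> 0" "inner x z \<ge> 0"
  shows "cross x z * cross x y > 0"
  by (rule signsum_real[OF _ _ ident1 ident2 ident3]) (use assms in auto)

lemma signsum2: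
  assumes "x \<noteq> 0" "y \<noteq> 0" "cross y z \<noteq> 0" "cross x y * cross y z \<ge> 0"
    "inner x y \<ge> 0" "inner y z \<ge> 0" "inner x z \<ge> 0"
  shows "cross x z * cross y z > 0"
proof -
  have "cross (-z) (-x) * cross (-z) (-y) > 0"
    apply (rule signsum1)
    using assms by (auto simp: cross_neg inner_commute cross_antisym[of z y] cross_antisym[of y x] mult.commute)
  thus ?thesis by (simp add: cross_neg cross_antisym[of z x] cross_antisym[of z y])
qed




definition slide :: "complex list \<Rightarrow> nat \<Rightarrow> real \<Rightarrow> complex list" where
  "slide xs q t = xs[q := xs!q + complex_of_real t * edir xs q]"

lemma edir_slide:
  assumes "q < length xs"
  shows "edir (slide xs q t) i = (if Suc i = q then edir xs i + complex_of_real t * edir xs q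
        else if i = q then complex_of_real (1 - t) * edir xs q else edir xs i)"
proof -
  consider "Suc i = q" | "i = q" | "Suc i \<noteq> q" "i \<noteq> q" by blast
  thus ?thesis
  proof cases
    case 1 thus ?thesis using assms unfolding slide_def edir_def by (auto simp: nth_list_update)
  next
    case 2 thus ?thesis using assms unfolding slide_def edir_def
      by (auto simp: nth_list_update of_real_diff algebra_simps)
  next
    case 3 thus ?thesis using assms unfolding slide_def edir_def by (auto simp: nth_list_update)
  qed
qed

lemma length_slide [simp]: "length (slide xs q t) = length xs"
  by (simp add: slide_def)

lemma nedges_slide [simp]: "nedges (slide xs q t) = nedges xs"
  by (simp add: nedges_def)

lemma slide_nth: "i \<noteq> q \<Longrightarrow> slide xs q t ! i = xs ! i"
  by (simp add: slide_def)

lemma sign_cases_mult_neg: "(a::real) * b < 0 \<longleftrightarrow> (a > 0 \<and> b < 0) \<or> (a < 0 \<and> b > 0)"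
  by (auto simp: mult_less_0_iff)




lemma dir_angle_nonneg: "0 \<le> dir_angle a b"
  unfolding dir_angle_cosang using cosang_bounds[of a b] by (intro arccos_lbound) (auto simp: abs_le_iff)

lemma move_fixed:
  fixes xs :: "complex list" and p :: nat and t \<theta> l :: real
  defines "d \<equiv> edir xs" and "m \<equiv> nedges xs" and "e \<equiv> edir xs p + complex_of_real t * edir xs (Suc p)"
  assumes dcc: "dcc_path \<theta> l xs" and th: "\<theta> \<le> pi/2"
   and infl: "inflection_edge xs p"
   and pre: "normal_edge l xs (Suc p) \<Longrightarrow> \<not> short_edge l xs p \<and>
        (Suc (Suc p) < m \<longrightarrow> \<not> short_edge l xs (Suc (Suc p)) \<and> inflection_edge xs (Suc p))"
   and t0: "0 < t" and t1: "t < 1"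
   and HT1: "dir_angle (d (p-1)) e \<le> \<theta>"
   and HT2: "dir_angle (d (Suc p)) e \<le> \<theta>"
   and HS1: "short_edge l xs p \<Longrightarrow> cmod e < l"
   and HS2: "long_edge l xs (Suc p) \<Longrightarrow> (1 - t) * cmod (d (Suc p)) > l"
   and HX: "cross (d (p-1)) e * cross (d (p-1)) (d p) > 0"
   and H3a: "0 < p - 1 \<Longrightarrow> short_edge l xs (p-1) \<Longrightarrow> non_inflection_edge xs (p-1) \<Longrightarrow>
              dir_angle (d (p-2)) e \<le> \<theta>"
   and H3b: "Suc (Suc p) < m \<Longrightarrow> short_edge l xs (Suc p) \<Longrightarrow> non_inflection_edge xs (Suc p) \<Longrightarrow>
              dir_angle (d (Suc (Suc p))) e \<le> \<theta>"
   and HL: "cmod e < cmod (d p) + t * cmod (d (Suc p))"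
  shows "dcc_path \<theta> l (slide xs (Suc p) t) \<and> path_length (slide xs (Suc p) t) < path_length xs"
proof -
  define ys where "ys = slide xs (Suc p) t"
  define d' where "d' = edir ys"
  have p0: "0 < p" and pm: "Suc p < m" using infl unfolding inflection_edge_def has_both_neighbours_def m_def by auto
  have lenx: "Suc (Suc p) < length xs" using pm unfolding m_def nedges_def by simp
  have d'_eq: "d' i = (if i = p then e else if i = Suc p then complex_of_real (1 - t) * d (Suc p) else d i)" for i
    unfolding d'_def ys_def d_def e_def using edir_slide[of "Suc p" xs t i] lenx by auto
  have nedy: "nedges ys = m" unfolding ys_def m_def by simp
  have nz: "\<And>i. i < m \<Longrightarrow> d i \<noteq> 0" using dcc unfolding dcc_path_def d_def m_def by auto
  have turns: "\<And>j. 0 < j \<Longrightarrow> j < m \<Longrightarrow> dir_angle (d (j - 1)) (d j) \<le> \<theta>"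
    using dcc unfolding dcc_path_def d_def m_def by auto
  have noadj: "\<And>i. Suc i < m \<Longrightarrow> \<not> (short_edge l xs i \<and> short_edge l xs (Suc i))"
    using dcc unfolding dcc_path_def m_def by auto
  have iii: "\<And>i. short_edge l xs i \<Longrightarrow> non_inflection_edge xs i \<Longrightarrow> dir_angle (d (i - 1)) (d (Suc i)) \<le> \<theta>"
    using dcc unfolding dcc_path_def d_def by auto
  have th0: "0 \<le> \<theta>" using turns[of "Suc p"] pm dir_angle_nonneg[of "d p" "d (Suc p)"] by auto
  have inn: "inner (d p) (d (Suc p)) \<ge> 0"
    using inner_nonneg_of_angle[OF turns[of "Suc p"] th0 th] pm by simp
  have ge: "cmod e \<ge> cmod (d p)"
  proof -
    have "(cmod e)^2 = (cmod (d p))^2 + 2*t*inner (d p) (d (Suc p)) + t^2*(cmod (d (Suc p)))^2"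
      unfolding e_def d_def by (rule norm_sq_lin)
    also have "\<dots> \<ge> (cmod (d p))^2" using t0 inn by simp
    finally show ?thesis by (rule power2_le_imp_le) simp
  qed
  have dp0: "d p \<noteq> 0" using nz pm by simp
  have dsp0: "d (Suc p) \<noteq> 0" using nz pm by simp
  have e0: "e \<noteq> 0" using ge dp0 by auto
  have sh_eq: "short_edge l ys i \<longleftrightarrow> (if i = p then short_edge l xs p else if i = Suc p then
      (short_edge l xs (Suc p) \<or> normal_edge l xs (Suc p)) else short_edge l xs i)" for i
  proof -
    have "short_edge l ys i \<longleftrightarrow> cmod (d' i) < l" unfolding short_edge_def d'_def ..
    moreover have "cmod (d' p) < l \<longleftrightarrow> short_edge l xs p"
    proof
      assume "cmod (d' p) < l" thus "short_edge l xs p" using ge d'_eq[of p] unfolding short_edge_def d_def by simp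
    next
      assume "short_edge l xs p" thus "cmod (d' p) < l" using HS1 d'_eq[of p] by simp
    qed
    moreover have "cmod (d' (Suc p)) < l \<longleftrightarrow> (short_edge l xs (Suc p) \<or> normal_edge l xs (Suc p))"
    proof -
      have n: "cmod (d' (Suc p)) = (1 - t) * cmod (d (Suc p))" using d'_eq[of "Suc p"] t1 by (simp add: norm_mult del: of_real_diff)
      have pos: "cmod (d (Suc p)) > 0" using dsp0 by simp
      show ?thesis
      proof (cases "cmod (d (Suc p)) > l")
        case True
        thus ?thesis using HS2 n unfolding long_edge_def short_edge_def normal_edge_def d_def by auto
      next
        case False
        have "(1 - t) * cmod (d (Suc p)) < cmod (d (Suc p))" using t0 pos by (simp add: algebra_simps)
        thus ?thesis using False n unfolding short_edge_def normal_edge_def d_def by auto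
      qed
    qed
    moreover have "i \<noteq> p \<Longrightarrow> i \<noteq> Suc p \<Longrightarrow> d' i = d i" using d'_eq[of i] by simp
    ultimately show ?thesis unfolding short_edge_def d_def by auto
  qed
  define s where "s j = cross (d (j - 1)) (d j)" for j
  define s' where "s' j = cross (d' (j - 1)) (d' j)" for j
  have possc: "\<And>c a. (c::real) > 0 \<Longrightarrow> (c * a > 0 \<longleftrightarrow> a > 0) \<and> (c * a < 0 \<longleftrightarrow> a < 0)"
    by (auto simp: zero_less_mult_iff mult_less_0_iff)
  have sgn: "(s' j > 0 \<longleftrightarrow> s j > 0) \<and> (s' j < 0 \<longleftrightarrow> s j < 0)" for j
  proof -
    consider "j = p" | "j = Suc p" | "j = Suc (Suc p)" | "j \<noteq> p" "j \<noteq> Suc p" "j \<noteq> Suc (Suc p)" by blast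
    thus ?thesis
    proof cases
      case 1
      have ne: "p - 1 \<noteq> p" "p - 1 \<noteq> Suc p" using p0 by auto
      have "d' (p - 1) = d (p - 1)" using d'_eq[of "p - 1"] ne by simp
      moreover have "d' p = e" using d'_eq[of p] by simp
      ultimately have "s' j = cross (d (p - 1)) e" unfolding s'_def 1 by simp
      hence "s' j * s j > 0" using HX unfolding s_def 1 by simp
      thus ?thesis by (auto simp: zero_less_mult_iff)
    next
      case 2
      have "s' j = (1 - t) * s j"
        unfolding s'_def s_def 2 using d'_eq[of p] d'_eq[of "Suc p"]
        by (simp add: e_def d_def cross_scale_right cross_lin_left cross_self del: of_real_diff)
      thus ?thesis using possc[of "1 - t" "s j"] t1 by simp
    next
      case 3
      have "s' j = (1 - t) * s j"
        unfolding s'_def s_def 3 using d'_eq[of "Suc p"] d'_eq[of "Suc (Suc p)"]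
        by (simp add: cross_scale_left del: of_real_diff)
      thus ?thesis using possc[of "1 - t" "s j"] t1 by simp
    next
      case 4
      have "j - 1 \<noteq> p" "j - 1 \<noteq> Suc p" using 4 p0 by auto
      hence "s' j = s j" unfolding s'_def s_def using d'_eq[of "j - 1"] d'_eq[of j] 4 by simp
      thus ?thesis by simp
    qed
  qed
  have infl_char: "inflection_edge zs i \<longleftrightarrow> has_both_neighbours zs i \<and>
      cross (edir zs (i - 1)) (edir zs i) * cross (edir zs (Suc i - 1)) (edir zs (Suc i)) < 0" for zs i
    unfolding inflection_edge_def by simp
  have infl_eq: "inflection_edge ys i \<longleftrightarrow> inflection_edge xs i" for i
  proof -
    have hb: "has_both_neighbours ys i \<longleftrightarrow> has_both_neighbours xs i"
      unfolding has_both_neighbours_def nedy[unfolded m_def] ..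
    have "inflection_edge ys i \<longleftrightarrow> has_both_neighbours ys i \<and> s' i * s' (Suc i) < 0"
      unfolding infl_char s'_def d'_def ..
    also have "\<dots> \<longleftrightarrow> has_both_neighbours xs i \<and> s i * s (Suc i) < 0"
      using hb sgn[of i] sgn[of "Suc i"] by (simp add: sign_cases_mult_neg)
    also have "\<dots> \<longleftrightarrow> inflection_edge xs i"
      unfolding infl_char s_def d_def ..
    finally show ?thesis .
  qed
  have ninfl_eq: "non_inflection_edge ys i \<longleftrightarrow> non_inflection_edge xs i" for i
    unfolding non_inflection_edge_def infl_eq has_both_neighbours_def nedy[unfolded m_def] ..
  have d'p: "d' p = e" using d'_eq[of p] by simp
  have d'sp: "d' (Suc p) = complex_of_real (1 - t) * d (Suc p)" using d'_eq[of "Suc p"] by simp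
  have d'o: "i \<noteq> p \<Longrightarrow> i \<noteq> Suc p \<Longrightarrow> d' i = d i" for i using d'_eq[of i] by simp
  have t1': "1 - t > 0" using t1 by simp
  have c_nz: "\<forall>i < nedges ys. edir ys i \<noteq> 0"
  proof (intro allI impI)
    fix i assume "i < nedges ys"
    hence im: "i < m" using nedy by simp
    show "edir ys i \<noteq> 0" unfolding d'_def[symmetric]
      using d'_eq[of i] e0 dsp0 t1 nz[OF im] by auto
  qed
  have c_turn: "\<forall>j. 0 < j \<and> j < nedges ys \<longrightarrow> dir_angle (edir ys (j - 1)) (edir ys j) \<le> \<theta>"
  proof (intro allI impI)
    fix j assume "0 < j \<and> j < nedges ys"
    hence j0: "0 < j" and jm: "j < m" using nedy by auto
    consider "j = p" | "j = Suc p" | "j = Suc (Suc p)" | "j \<noteq> p" "j \<noteq> Suc p" "j \<noteq> Suc (Suc p)" by blast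
    then have "dir_angle (d' (j - 1)) (d' j) \<le> \<theta>"
    proof cases
      case 1
      have "d' (p - 1) = d (p - 1)" using d'o[of "p - 1"] p0 by simp
      thus ?thesis using HT1 d'p 1 by simp
    next
      case 2
      have "dir_angle (d' (j - 1)) (d' j) = dir_angle e (d (Suc p))"
        using 2 d'p d'sp dir_angle_scale_right[OF t1'] by simp
      thus ?thesis using HT2 dir_angle_sym[of e "d (Suc p)"] by simp
    next
      case 3
      have "dir_angle (d' (j - 1)) (d' j) = dir_angle (d (Suc p)) (d (Suc (Suc p)))"
        using 3 d'sp d'o[of "Suc (Suc p)"] dir_angle_scale_left[OF t1'] by simp
      thus ?thesis using turns[of "Suc (Suc p)"] 3 jm by simp
    next
      case 4
      have "j - 1 \<noteq> p" "j - 1 \<noteq> Suc p" using 4 p0 j0 by auto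
      hence "d' (j - 1) = d (j - 1)" "d' j = d j" using d'o 4 by auto
      thus ?thesis using turns[OF j0 jm] by simp
    qed
    thus "dir_angle (edir ys (j - 1)) (edir ys j) \<le> \<theta>" unfolding d'_def .
  qed
  have c_adj: "\<forall>i. Suc i < nedges ys \<longrightarrow> \<not> (short_edge l ys i \<and> short_edge l ys (Suc i))"
  proof (intro allI impI)
    fix i assume "Suc i < nedges ys"
    hence im: "Suc i < m" using nedy by simp
    consider "Suc i = p" | "i = p" | "i = Suc p" | "Suc i \<noteq> p" "i \<noteq> p" "i \<noteq> Suc p" by blast
    thus "\<not> (short_edge l ys i \<and> short_edge l ys (Suc i))"
    proof cases
      case 1
      thus ?thesis using noadj[OF im] sh_eq[of i] sh_eq[of "Suc i"] by auto
    next
      case 2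
      thus ?thesis using noadj[OF im] sh_eq[of i] sh_eq[of "Suc i"] pre by auto
    next
      case 3
      thus ?thesis using noadj[OF im] noadj[of p] pm sh_eq[of i] sh_eq[of "Suc i"] pre im by auto
    next
      case 4
      thus ?thesis using noadj[OF im] sh_eq[of i] sh_eq[of "Suc i"] by auto
    qed
  qed
  have c_iii: "\<forall>i. short_edge l ys i \<and> non_inflection_edge ys i \<longrightarrow>
           dir_angle (edir ys (i - 1)) (edir ys (Suc i)) \<le> \<theta>"
  proof (intro allI impI)
    fix i assume as: "short_edge l ys i \<and> non_inflection_edge ys i"
    hence ni: "non_inflection_edge xs i" using ninfl_eq by simp
    hence hb: "0 < i" "Suc i < m" unfolding non_inflection_edge_def has_both_neighbours_def m_def by auto
    consider "Suc i = p" | "i = p" | "i = Suc p" | "i = Suc (Suc p)" | "Suc i \<noteq> p" "i \<noteq> p" "i \<noteq> Suc p" "i \<noteq> Suc (Suc p)" by blast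
    then have "dir_angle (d' (i - 1)) (d' (Suc i)) \<le> \<theta>"
    proof cases
      case 1
      have sh: "short_edge l xs i" using as sh_eq[of i] 1 by auto
      have "d' (i - 1) = d (p - 2)" using d'o[of "i - 1"] 1 by auto
      moreover have "d' (Suc i) = e" using 1 d'p by simp
      moreover have "dir_angle (d (p - 2)) e \<le> \<theta>" using H3a 1 hb sh ni by auto
      ultimately show ?thesis by simp
    next
      case 2
      thus ?thesis using ni infl unfolding non_inflection_edge_def by simp
    next
      case 3
      have "short_edge l xs (Suc p) \<or> normal_edge l xs (Suc p)" using as sh_eq[of i] 3 by auto
      moreover have "\<not> inflection_edge xs (Suc p)" using ni 3 unfolding non_inflection_edge_def by simp
      ultimately have sh: "short_edge l xs (Suc p)" using pre hb 3 by auto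
      have "d' (i - 1) = e" using 3 d'p by simp
      moreover have "d' (Suc i) = d (Suc (Suc p))" using d'o[of "Suc i"] 3 by auto
      moreover have "dir_angle (d (Suc (Suc p))) e \<le> \<theta>" using H3b 3 hb sh ni by auto
      ultimately show ?thesis using dir_angle_sym by metis
    next
      case 4
      have sh: "short_edge l xs i" using as sh_eq[of i] 4 by auto
      have "dir_angle (d' (i - 1)) (d' (Suc i)) = dir_angle (d (i - 1)) (d (Suc i))"
        using 4 d'sp d'o[of "Suc i"] dir_angle_scale_left[OF t1'] by simp
      thus ?thesis using iii[OF sh ni] by simp
    next
      case 5
      have sh: "short_edge l xs i" using as sh_eq[of i] 5 by auto
      have "i - 1 \<noteq> p" "i - 1 \<noteq> Suc p" using 5 hb by auto
      hence "d' (i - 1) = d (i - 1)" "d' (Suc i) = d (Suc i)" using d'o 5 by auto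
      thus ?thesis using iii[OF sh ni] by simp
    qed
    thus "dir_angle (edir ys (i - 1)) (edir ys (Suc i)) \<le> \<theta>" unfolding d'_def .
  qed
  have dccy: "dcc_path \<theta> l ys"
    unfolding dcc_path_def using c_nz c_turn c_adj c_iii lenx
    by (auto simp: ys_def simp del: length_slide) (simp add: slide_def)
  have len: "path_length ys < path_length xs"
  proof -
    define A where "A = {..<m}"
    have fin: "finite A" unfolding A_def by simp
    have pA: "p \<in> A" and spA: "Suc p \<in> A" unfolding A_def using pm by auto
    have "path_length ys = (\<Sum>i\<in>A. cmod (d' i))" unfolding path_length_def A_def nedy d'_def ..
    also have "\<dots> = cmod (d' p) + cmod (d' (Suc p)) + (\<Sum>i\<in>A - {p} - {Suc p}. cmod (d' i))"
      using fin pA spA by (simp add: sum.remove[of _ p] sum.remove[of _ "Suc p"])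
    also have "(\<Sum>i\<in>A - {p} - {Suc p}. cmod (d' i)) = (\<Sum>i\<in>A - {p} - {Suc p}. cmod (d i))"
      using d'o by (intro sum.cong) auto
    also have "cmod (d' (Suc p)) = (1 - t) * cmod (d (Suc p))" using d'sp t1 by (simp add: norm_mult del: of_real_diff)
    also have "cmod (d' p) = cmod e" using d'p by simp
    finally have "path_length ys = cmod e + (1 - t) * cmod (d (Suc p)) + (\<Sum>i\<in>A - {p} - {Suc p}. cmod (d i))" .
    moreover have "path_length xs = cmod (d p) + cmod (d (Suc p)) + (\<Sum>i\<in>A - {p} - {Suc p}. cmod (d i))"
      unfolding path_length_def A_def[symmetric] m_def[symmetric] d_def[symmetric]
      using fin pA spA by (simp add: sum.remove[of _ p] sum.remove[of _ "Suc p"])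
    ultimately show ?thesis using HL by (simp add: algebra_simps)
  qed
  show ?thesis using dccy len unfolding ys_def by simp
qed


lemma sq_expand: "((a::real) + t*b)^2 = a^2 + 2*t*(a*b) + t^2*b^2"
  by (simp add: power2_eq_square algebra_simps)

lemma strict_tri:
  assumes "cross x y \<noteq> 0" "t > 0"
  shows "cmod (x + complex_of_real t * y) < cmod x + t * cmod y"
proof -
  have c2: "(cross x y)^2 > 0" using assms(1) by simp
  have pm: "(cmod x * cmod y)^2 = (cmod x)^2 * (cmod y)^2" by (rule power_mult_distrib)
  have sq: "(inner x y)^2 < (cmod x * cmod y)^2"
    using ident3[of x y] c2 pm by linarith
  have nn: "cmod x * cmod y \<ge> 0" by simp
  have lt: "inner x y < cmod x * cmod y"
  proof (cases "inner x y \<le> 0")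
    case True
    have "cmod x * cmod y \<noteq> 0" using sq True by auto
    thus ?thesis using True nn by linarith
  next
    case False
    thus ?thesis using sq nn power2_less_imp_less by blast
  qed
  have "2*t*inner x y < 2*t*(cmod x * cmod y)" using lt assms(2) by simp
  hence "(cmod (x + complex_of_real t * y))^2 < (cmod x + t * cmod y)^2"
    unfolding norm_sq_lin sq_expand by linarith
  moreover have "0 \<le> cmod x + t * cmod y" using assms(2) by simp
  ultimately show ?thesis by (rule power2_less_imp_less)
qed
lemma sign_chain: "(a::real) * b > 0 \<Longrightarrow> b * c < 0 \<Longrightarrow> a * c < 0"
  by (auto simp: zero_less_mult_iff mult_less_0_iff)

lemma ev_exists: "eventually P (at_right (0::real)) \<Longrightarrow> \<exists>t. P t"
proof -
  assume "eventually P (at_right (0::real))"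
  then obtain b where b: "b > 0" "\<And>y. y > 0 \<Longrightarrow> y < b \<Longrightarrow> P y" unfolding eventually_at_right_field by auto
  have "P (b/2)" using b by (intro b(2)) auto
  thus ?thesis by blast
qed

lemma move_next:
  fixes xs :: "complex list" and p :: nat and \<theta> l :: real
  assumes dcc: "dcc_path \<theta> l xs" and th: "\<theta> \<le> pi/2"
   and infl: "inflection_edge xs p"
   and pre: "normal_edge l xs (Suc p) \<Longrightarrow> \<not> short_edge l xs p \<and>
        (Suc (Suc p) < nedges xs \<longrightarrow> \<not> short_edge l xs (Suc (Suc p)) \<and> inflection_edge xs (Suc p))"
  shows "\<exists>t. dcc_path \<theta> l (slide xs (Suc p) t) \<and> path_length (slide xs (Suc p) t) < path_length xs"
proof -
  define d where "d = edir xs"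
  define m where "m = nedges xs"
  define e where "e t = d p + complex_of_real t * d (Suc p)" for t
  define s where "s j = cross (d (j - 1)) (d j)" for j
  have p0: "0 < p" and pm: "Suc p < m" using infl unfolding inflection_edge_def has_both_neighbours_def m_def by auto
  have nz: "\<And>i. i < m \<Longrightarrow> d i \<noteq> 0" using dcc unfolding dcc_path_def d_def m_def by auto
  have turns: "\<And>j. 0 < j \<Longrightarrow> j < m \<Longrightarrow> dir_angle (d (j - 1)) (d j) \<le> \<theta>"
    using dcc unfolding dcc_path_def d_def m_def by auto
  have iii: "\<And>i. short_edge l xs i \<Longrightarrow> non_inflection_edge xs i \<Longrightarrow> dir_angle (d (i - 1)) (d (Suc i)) \<le> \<theta>"
    using dcc unfolding dcc_path_def d_def by auto
  have th0: "0 \<le> \<theta>" using turns[of "Suc p"] pm dir_angle_nonneg[of "d p" "d (Suc p)"] by auto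
  have innt: "\<And>j. 0 < j \<Longrightarrow> j < m \<Longrightarrow> inner (d (j - 1)) (d j) \<ge> 0"
    using inner_nonneg_of_angle[OF turns th0 th] by auto
  have ip: "s p * s (Suc p) < 0" using infl unfolding inflection_edge_def s_def d_def by simp
  have sp0: "s p \<noteq> 0" and ssp0: "s (Suc p) \<noteq> 0" using ip by auto
  have ssp: "s (Suc p) = cross (d p) (d (Suc p))" unfolding s_def by simp
  have dpm1: "d (p - 1) \<noteq> 0" "d p \<noteq> 0" "d (Suc p) \<noteq> 0" using nz pm by auto
  have infl_of: "\<And>i. has_both_neighbours xs i \<Longrightarrow> inflection_edge xs i \<longleftrightarrow> s i * s (Suc i) < 0"
    unfolding inflection_edge_def s_def d_def by simp
  have et: "\<forall>\<^sub>F t in at_right (0::real). 0 < t \<and> t < 1"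
  proof -
    have "\<forall>\<^sub>F t in at_right (0::real). t < 1"
      using order_tendstoD(2)[OF tendsto_ident_at[of "0::real" "{0<..}"], of 1] by simp
    moreover have "\<forall>\<^sub>F t in at_right (0::real). 0 < t" by (simp add: eventually_at_right_less)
    ultimately show ?thesis by eventually_elim simp
  qed
  have eT1: "\<forall>\<^sub>F t in at_right 0. dir_angle (d (p-1)) (e t) \<le> \<theta>"
    unfolding e_def
  proof (rule angle_eventually[OF dpm1(1) dpm1(2) th0 th])
    show "dir_angle (d (p - 1)) (d p) \<le> \<theta>" using turns p0 pm by simp
    have "cross (d p) (d (p - 1)) = - s p" unfolding s_def using cross_antisym by metis
    thus "dir_angle (d (p - 1)) (d p) < \<theta> \<or> 0 < cross (d p) (d (p - 1)) * cross (d p) (d (Suc p))"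
      using ip ssp by simp
  qed
  have eT2: "\<forall>\<^sub>F t in at_right 0. dir_angle (d (Suc p)) (e t) \<le> \<theta>"
    unfolding e_def
  proof (rule angle_eventually[OF dpm1(3) dpm1(2) th0 th])
    show "dir_angle (d (Suc p)) (d p) \<le> \<theta>" using turns[of "Suc p"] pm dir_angle_sym[of "d (Suc p)" "d p"] by simp
    show "dir_angle (d (Suc p)) (d p) < \<theta> \<or> 0 < cross (d p) (d (Suc p)) * cross (d p) (d (Suc p))"
      using ssp ssp0 by (auto simp: zero_less_mult_iff)
  qed
  have eS1: "\<forall>\<^sub>F t in at_right 0. short_edge l xs p \<longrightarrow> cmod (e t) < l"
  proof (cases "short_edge l xs p")
    case True
    have "((\<lambda>t. cmod (e t)) \<longlongrightarrow> cmod (d p)) (at_right 0)" unfolding e_def by (intro tendsto_intros lin_tendsto)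
    from order_tendstoD(2)[OF this, of l] True show ?thesis unfolding short_edge_def d_def by simp
  qed simp
  have eS2: "\<forall>\<^sub>F t in at_right 0. long_edge l xs (Suc p) \<longrightarrow> (1 - t) * cmod (d (Suc p)) > l"
  proof (cases "long_edge l xs (Suc p)")
    case True
    have "((\<lambda>t. (1 - t) * cmod (d (Suc p))) \<longlongrightarrow> (1 - 0) * cmod (d (Suc p))) (at_right 0)" by (intro tendsto_intros)
    from order_tendstoD(1)[OF this, of l] True show ?thesis unfolding long_edge_def d_def by simp
  qed simp
  have eX: "\<forall>\<^sub>F t in at_right 0. cross (d (p-1)) (e t) * cross (d (p-1)) (d p) > 0"
  proof -
    have "((\<lambda>t. (cross (d (p-1)) (d p) + t * cross (d (p-1)) (d (Suc p))) * cross (d (p-1)) (d p))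
        \<longlongrightarrow> (cross (d (p-1)) (d p) + 0 * cross (d (p-1)) (d (Suc p))) * cross (d (p-1)) (d p)) (at_right 0)"
      by (intro tendsto_intros)
    moreover have "(cross (d (p-1)) (d p) + 0 * cross (d (p-1)) (d (Suc p))) * cross (d (p-1)) (d p) > 0"
      using sp0 unfolding s_def by (auto simp: zero_less_mult_iff)
    ultimately show ?thesis unfolding e_def cross_lin using order_tendstoD(1) by blast
  qed
  have e3a: "\<forall>\<^sub>F t in at_right 0. 0 < p - 1 \<longrightarrow> short_edge l xs (p-1) \<longrightarrow> non_inflection_edge xs (p-1) \<longrightarrow>
              dir_angle (d (p-2)) (e t) \<le> \<theta>"
  proof (cases "0 < p - 1 \<and> short_edge l xs (p-1) \<and> non_inflection_edge xs (p-1)")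
    case True
    hence p1: "0 < p - 1" and sh: "short_edge l xs (p-1)" and ni: "non_inflection_edge xs (p-1)" by auto
    have ar: "p - 1 - 1 = p - 2" "Suc (p - 1) = p" using p0 by auto
    have old: "dir_angle (d (p - 2)) (d p) \<le> \<theta>" using iii[OF sh ni] unfolding ar .
    have nz2: "d (p - 2) \<noteq> 0" using nz pm by auto
    have hb: "has_both_neighbours xs (p - 1)" using ni unfolding non_inflection_edge_def by simp
    have nn: "\<not> s (p - 1) * s p < 0" using ni infl_of[OF hb] p0 unfolding non_inflection_edge_def by simp
    have sg: "cross (d (p - 2)) (d p) * cross (d (p - 1)) (d p) > 0"
    proof (rule signsum2[OF nz2 dpm1(1)])
      show "cross (d (p - 1)) (d p) \<noteq> 0" using sp0 unfolding s_def .
      have "s (p - 1) = cross (d (p - 2)) (d (p - 1))" unfolding s_def by (simp add: numeral_2_eq_2)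
      thus "0 \<le> cross (d (p - 2)) (d (p - 1)) * cross (d (p - 1)) (d p)" using nn unfolding s_def by simp
      show "0 \<le> inner (d (p - 2)) (d (p - 1))" using innt[of "p - 1"] p1 pm unfolding ar by simp
      show "0 \<le> inner (d (p - 1)) (d p)" using innt[of p] p0 pm by simp
      show "0 \<le> inner (d (p - 2)) (d p)" using inner_nonneg_of_angle[OF old th0 th] .
    qed
    have "cross (d p) (d (p - 2)) * cross (d p) (d (Suc p)) > 0"
    proof -
      have "cross (d (p - 2)) (d p) * s (Suc p) < 0"
      proof -
        have sp_eq: "s p = cross (d (p-1)) (d p)" unfolding s_def ..
        show ?thesis using sign_chain[OF sg[folded sp_eq] ip] .
      qed
      thus ?thesis using cross_antisym[of "d p" "d (p - 2)"] ssp by simp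
    qed
    hence "\<forall>\<^sub>F t in at_right 0. dir_angle (d (p-2)) (e t) \<le> \<theta>"
      unfolding e_def using angle_eventually[OF nz2 dpm1(2) th0 th old] by simp
    thus ?thesis by eventually_elim simp
  qed auto
  have e3b: "\<forall>\<^sub>F t in at_right 0. Suc (Suc p) < m \<longrightarrow> short_edge l xs (Suc p) \<longrightarrow> non_inflection_edge xs (Suc p) \<longrightarrow>
              dir_angle (d (Suc (Suc p))) (e t) \<le> \<theta>"
  proof (cases "Suc (Suc p) < m \<and> short_edge l xs (Suc p) \<and> non_inflection_edge xs (Suc p)")
    case True
    hence p1: "Suc (Suc p) < m" and sh: "short_edge l xs (Suc p)" and ni: "non_inflection_edge xs (Suc p)" by auto
    have old0: "dir_angle (d p) (d (Suc (Suc p))) \<le> \<theta>" using iii[OF sh ni] by simp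
    hence old: "dir_angle (d (Suc (Suc p))) (d p) \<le> \<theta>" using dir_angle_sym by metis
    have nz2: "d (Suc (Suc p)) \<noteq> 0" using nz p1 by auto
    have hb: "has_both_neighbours xs (Suc p)" using ni unfolding non_inflection_edge_def by simp
    have nn: "\<not> s (Suc p) * s (Suc (Suc p)) < 0" using ni infl_of[OF hb] unfolding non_inflection_edge_def by simp
    have sg: "cross (d p) (d (Suc (Suc p))) * cross (d p) (d (Suc p)) > 0"
    proof (rule signsum1[OF dpm1(3) nz2])
      show "cross (d p) (d (Suc p)) \<noteq> 0" using ssp0 ssp by simp
      show "0 \<le> cross (d p) (d (Suc p)) * cross (d (Suc p)) (d (Suc (Suc p)))" using nn unfolding s_def by simp
      show "0 \<le> inner (d p) (d (Suc p))" using innt[of "Suc p"] pm by simp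
      show "0 \<le> inner (d (Suc p)) (d (Suc (Suc p)))" using innt[of "Suc (Suc p)"] p1 by simp
      show "0 \<le> inner (d p) (d (Suc (Suc p)))" using inner_nonneg_of_angle[OF old0 th0 th] .
    qed
    hence "\<forall>\<^sub>F t in at_right 0. dir_angle (d (Suc (Suc p))) (e t) \<le> \<theta>"
      unfolding e_def using angle_eventually[OF nz2 dpm1(2) th0 th old] by simp
    thus ?thesis by eventually_elim simp
  qed auto
  have eL: "\<forall>\<^sub>F t in at_right 0. cmod (e t) < cmod (d p) + t * cmod (d (Suc p))"
  proof -
    have "\<forall>\<^sub>F t in at_right (0::real). 0 < t" by (simp add: eventually_at_right_less)
    thus ?thesis
      by eventually_elim (use strict_tri ssp0 ssp in \<open>auto simp: e_def\<close>)
  qed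
  have "\<forall>\<^sub>F t in at_right 0. dcc_path \<theta> l (slide xs (Suc p) t) \<and> path_length (slide xs (Suc p) t) < path_length xs"
    using et eT1 eT2 eS1 eS2 eX e3a e3b eL
  proof eventually_elim
    case (elim t)
    have pre': "normal_edge l xs (Suc p) \<Longrightarrow> \<not> short_edge l xs p \<and>
        (Suc (Suc p) < nedges xs \<longrightarrow> \<not> short_edge l xs (Suc (Suc p)) \<and> inflection_edge xs (Suc p))"
      using pre by blast
    note el = elim[unfolded e_def d_def m_def]
    show ?case
      apply (rule move_fixed[OF dcc th infl pre'])
      using el by blast+
  qed
  thus ?thesis by (rule ev_exists)
qed




lemma edir_rev:
  assumes "i < nedges xs"
  shows "edir (rev xs) i = - edir xs (nedges xs - 1 - i)"
  using assms unfolding edir_def nedges_def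
  by (simp add: rev_nth Suc_diff_Suc algebra_simps numeral_2_eq_2)

lemma nedges_rev [simp]: "nedges (rev xs) = nedges xs"
  by (simp add: nedges_def)

lemma dir_angle_neg: "dir_angle (-a) (-b) = dir_angle a b"
  unfolding dir_angle_def by simp

lemma rev_props:
  assumes i: "i < nedges xs"
  defines "m \<equiv> nedges xs"
  shows "short_edge l (rev xs) i \<longleftrightarrow> short_edge l xs (m - 1 - i)"
    and "normal_edge l (rev xs) i \<longleftrightarrow> normal_edge l xs (m - 1 - i)"
    and "has_both_neighbours (rev xs) i \<longleftrightarrow> has_both_neighbours xs (m - 1 - i)"
  using edir_rev[OF i] i unfolding short_edge_def normal_edge_def has_both_neighbours_def m_def
  by auto

lemma rev_infl:
  assumes i: "i < nedges xs"
  defines "m \<equiv> nedges xs"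
  shows "inflection_edge (rev xs) i \<longleftrightarrow> inflection_edge xs (m - 1 - i)"
proof (cases "has_both_neighbours xs (m - 1 - i)")
  case False thus ?thesis using rev_props(3)[OF i] unfolding inflection_edge_def m_def by simp
next
  case True
  hence hb: "0 < i" "Suc i < m" using rev_props(3)[OF i] unfolding m_def has_both_neighbours_def by auto
  have e1: "edir (rev xs) (i - 1) = - edir xs (m - i)" using edir_rev[of "i - 1" xs] hb unfolding m_def by simp
  have e2: "edir (rev xs) i = - edir xs (m - 1 - i)" using edir_rev[OF i] unfolding m_def .
  have e3: "edir (rev xs) (Suc i) = - edir xs (m - 1 - i - 1)" using edir_rev[of "Suc i" xs] hb unfolding m_def by simp
  have a1: "m - 1 - i - 1 = m - Suc (Suc i)" by simp
  have a2: "Suc (m - 1 - i) = m - i" using hb by simp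
  have "cross (edir (rev xs) (i - 1)) (edir (rev xs) i) * cross (edir (rev xs) i) (edir (rev xs) (Suc i))
      = cross (edir xs (m - 1 - i - 1)) (edir xs (m - 1 - i)) * cross (edir xs (m - 1 - i)) (edir xs (Suc (m - 1 - i)))"
    unfolding e1 e2 e3 cross_neg a2 using cross_antisym[of "edir xs (m - i)" "edir xs (m - 1 - i)"]
      cross_antisym[of "edir xs (m - 1 - i)" "edir xs (m - 1 - i - 1)"] by (simp add: algebra_simps)
  thus ?thesis using True rev_props(3)[OF i] unfolding inflection_edge_def m_def by simp
qed


lemma rev_ninfl:
  assumes i: "i < nedges xs"
  shows "non_inflection_edge (rev xs) i \<longleftrightarrow> non_inflection_edge xs (nedges xs - 1 - i)"
  unfolding non_inflection_edge_def using rev_infl[OF i] rev_props(3)[OF i] by simp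

lemma dcc_rev:
  assumes dcc: "dcc_path \<theta> l xs"
  shows "dcc_path \<theta> l (rev xs)"
proof -
  define m where "m = nedges xs"
  have nz: "\<And>i. i < m \<Longrightarrow> edir xs i \<noteq> 0" using dcc unfolding dcc_path_def m_def by auto
  have turns: "\<And>j. 0 < j \<Longrightarrow> j < m \<Longrightarrow> dir_angle (edir xs (j - 1)) (edir xs j) \<le> \<theta>"
    using dcc unfolding dcc_path_def m_def by auto
  have noadj: "\<And>i. Suc i < m \<Longrightarrow> \<not> (short_edge l xs i \<and> short_edge l xs (Suc i))"
    using dcc unfolding dcc_path_def m_def by auto
  have iii: "\<And>i. short_edge l xs i \<Longrightarrow> non_inflection_edge xs i \<Longrightarrow> dir_angle (edir xs (i - 1)) (edir xs (Suc i)) \<le> \<theta>"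
    using dcc unfolding dcc_path_def by auto
  have c1: "rev xs \<noteq> []" using dcc unfolding dcc_path_def by simp
  have c2: "\<forall>i < nedges (rev xs). edir (rev xs) i \<noteq> 0"
    using nz edir_rev unfolding m_def by fastforce
  have c3: "\<forall>j. 0 < j \<and> j < nedges (rev xs) \<longrightarrow> dir_angle (edir (rev xs) (j - 1)) (edir (rev xs) j) \<le> \<theta>"
  proof (intro allI impI)
    fix j assume "0 < j \<and> j < nedges (rev xs)"
    hence j: "0 < j" "j < m" unfolding m_def by auto
    have "edir (rev xs) (j - 1) = - edir xs (m - j)" using edir_rev[of "j - 1" xs] j unfolding m_def by simp
    moreover have "edir (rev xs) j = - edir xs (m - j - 1)" using edir_rev[of j xs] j unfolding m_def by simp
    moreover have "dir_angle (edir xs (m - j - 1)) (edir xs (m - j)) \<le> \<theta>" using turns[of "m - j"] j by simp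
    ultimately show "dir_angle (edir (rev xs) (j - 1)) (edir (rev xs) j) \<le> \<theta>"
      using dir_angle_neg dir_angle_sym by metis
  qed
  have c4: "\<forall>i. Suc i < nedges (rev xs) \<longrightarrow> \<not> (short_edge l (rev xs) i \<and> short_edge l (rev xs) (Suc i))"
  proof (intro allI impI)
    fix i assume "Suc i < nedges (rev xs)"
    hence i: "Suc i < m" unfolding m_def by simp
    have k: "Suc (m - 1 - Suc i) < m" using i by arith
    have "short_edge l (rev xs) i \<longleftrightarrow> short_edge l xs (Suc (m - 1 - Suc i))"
      using rev_props(1)[of i xs l] i unfolding m_def by (simp add: Suc_diff_Suc)
    moreover have "short_edge l (rev xs) (Suc i) \<longleftrightarrow> short_edge l xs (m - 1 - Suc i)"
      using rev_props(1)[of "Suc i" xs l] i unfolding m_def by simp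
    ultimately show "\<not> (short_edge l (rev xs) i \<and> short_edge l (rev xs) (Suc i))"
      using noadj[of "m - 1 - Suc i"] k by blast
  qed
  have c5: "\<forall>i. short_edge l (rev xs) i \<and> non_inflection_edge (rev xs) i \<longrightarrow>
           dir_angle (edir (rev xs) (i - 1)) (edir (rev xs) (Suc i)) \<le> \<theta>"
  proof (intro allI impI)
    fix i assume as: "short_edge l (rev xs) i \<and> non_inflection_edge (rev xs) i"
    hence hb: "0 < i" "Suc i < m" unfolding non_inflection_edge_def has_both_neighbours_def m_def by auto
    hence im: "i < nedges xs" unfolding m_def by simp
    have sh: "short_edge l xs (m - 1 - i)" using as rev_props(1)[OF im] unfolding m_def by simp
    have ni: "non_inflection_edge xs (m - 1 - i)" using as rev_ninfl[OF im] unfolding m_def by simp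
    have "edir (rev xs) (i - 1) = - edir xs (m - i)" using edir_rev[of "i - 1" xs] hb unfolding m_def by simp
    moreover have "edir (rev xs) (Suc i) = - edir xs (m - 1 - i - 1)" using edir_rev[of "Suc i" xs] hb unfolding m_def by simp
    moreover have "dir_angle (edir xs (m - 1 - i - 1)) (edir xs (Suc (m - 1 - i))) \<le> \<theta>" using iii[OF sh ni] .
    moreover have "Suc (m - 1 - i) = m - i" using hb by simp
    ultimately show "dir_angle (edir (rev xs) (i - 1)) (edir (rev xs) (Suc i)) \<le> \<theta>"
      using dir_angle_neg dir_angle_sym by metis
  qed
  show ?thesis unfolding dcc_path_def using c1 c2 c3 c4 c5 by blast
qed

lemma path_length_rev: "path_length (rev xs) = path_length xs"
proof -
  define m where "m = nedges xs"
  have "path_length (rev xs) = (\<Sum>i<m. cmod (edir xs (m - 1 - i)))"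
    unfolding path_length_def m_def using edir_rev by (intro sum.cong) auto
  also have "\<dots> = (\<Sum>i<m. cmod (edir xs i))"
    by (rule sum.reindex_bij_witness[of _ "\<lambda>i. m - 1 - i" "\<lambda>i. m - 1 - i"]) auto
  finally show ?thesis unfolding path_length_def m_def .
qed




lemma edir_cons_Suc: "edir (a # xs) (Suc i) = edir xs i"
  unfolding edir_def by simp

lemma edir_snoc: "Suc i < length xs \<Longrightarrow> edir (xs @ [b]) i = edir xs i"
  unfolding edir_def by (simp add: nth_append)

lemma nedges_cons: "xs \<noteq> [] \<Longrightarrow> nedges (a # xs) = Suc (nedges xs)"
  unfolding nedges_def by (cases xs) auto

lemma nedges_snoc: "xs \<noteq> [] \<Longrightarrow> nedges (xs @ [b]) = Suc (nedges xs)"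
  unfolding nedges_def by (cases xs) auto

lemma dcc_tl:
  assumes dcc: "dcc_path \<theta> l (a # xs)" and ne: "xs \<noteq> []"
  shows "dcc_path \<theta> l xs"
proof -
  define A where "A = a # xs"
  have nA: "nedges A = Suc (nedges xs)" unfolding A_def using nedges_cons[OF ne] .
  have ed: "\<And>k. edir A (Suc k) = edir xs k" unfolding A_def by (rule edir_cons_Suc)
  have sh: "\<And>k. short_edge l A (Suc k) \<longleftrightarrow> short_edge l xs k" unfolding short_edge_def ed ..
  have infl: "\<And>k. 0 < k \<Longrightarrow> inflection_edge A (Suc k) \<longleftrightarrow> inflection_edge xs k"
  proof -
    fix k :: nat assume k: "0 < k"
    have "edir A (Suc k - 1) = edir xs (k - 1)" using ed[of "k - 1"] k by simp
    thus "inflection_edge A (Suc k) \<longleftrightarrow> inflection_edge xs k"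
      unfolding inflection_edge_def has_both_neighbours_def nA using ed k by simp
  qed
  have ninfl: "\<And>k. non_inflection_edge xs k \<Longrightarrow> non_inflection_edge A (Suc k)"
    unfolding non_inflection_edge_def using infl unfolding has_both_neighbours_def nA by auto
  have D: "dcc_path \<theta> l A" using dcc unfolding A_def .
  show ?thesis unfolding dcc_path_def
  proof (intro conjI allI impI)
    show "xs \<noteq> []" by fact
  next
    fix i assume "i < nedges xs"
    thus "edir xs i \<noteq> 0" using D unfolding dcc_path_def nA ed[symmetric] by auto
  next
    fix j assume j: "0 < j \<and> j < nedges xs"
    have "dir_angle (edir A (Suc j - 1)) (edir A (Suc j)) \<le> \<theta>" using D j unfolding dcc_path_def nA by auto
    moreover have "edir A (Suc j - 1) = edir xs (j - 1)" using ed[of "j - 1"] j by simp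
    ultimately show "dir_angle (edir xs (j - 1)) (edir xs j) \<le> \<theta>" unfolding ed by simp
  next
    fix i assume "Suc i < nedges xs"
    thus "\<not> (short_edge l xs i \<and> short_edge l xs (Suc i))" using D unfolding dcc_path_def nA sh[symmetric] by auto
  next
    fix i assume as: "short_edge l xs i \<and> non_inflection_edge xs i"
    hence "0 < i" unfolding non_inflection_edge_def has_both_neighbours_def by auto
    have "dir_angle (edir A (Suc i - 1)) (edir A (Suc (Suc i))) \<le> \<theta>"
      using D as ninfl sh unfolding dcc_path_def by blast
    moreover have "edir A (Suc i - 1) = edir xs (i - 1)" using ed[of "i - 1"] \<open>0 < i\<close> by simp
    ultimately show "dir_angle (edir xs (i - 1)) (edir xs (Suc i)) \<le> \<theta>" unfolding ed by simp
  qed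
qed

lemma dcc_butlast:
  assumes dcc: "dcc_path \<theta> l (xs @ [b])" and ne: "xs \<noteq> []"
  shows "dcc_path \<theta> l xs"
proof -
  define A where "A = xs @ [b]"
  have nA: "nedges A = Suc (nedges xs)" unfolding A_def using nedges_snoc[OF ne] .
  have ed: "\<And>k. k < nedges xs \<Longrightarrow> edir A k = edir xs k" unfolding A_def nedges_def
    by (intro edir_snoc) simp
  have sh: "\<And>k. k < nedges xs \<Longrightarrow> short_edge l A k \<longleftrightarrow> short_edge l xs k" unfolding short_edge_def using ed by simp
  have ninfl: "\<And>k. non_inflection_edge xs k \<Longrightarrow> non_inflection_edge A k"
  proof -
    fix k assume nk: "non_inflection_edge xs k"
    hence k: "0 < k" "Suc k < nedges xs" unfolding non_inflection_edge_def has_both_neighbours_def by auto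
    have e: "edir A (k - 1) = edir xs (k - 1)" "edir A k = edir xs k" "edir A (Suc k) = edir xs (Suc k)"
      using ed k by auto
    show "non_inflection_edge A k" using nk k
      unfolding non_inflection_edge_def inflection_edge_def has_both_neighbours_def nA e by simp
  qed
  have D: "dcc_path \<theta> l A" using dcc unfolding A_def .
  show ?thesis unfolding dcc_path_def
  proof (intro conjI allI impI)
    show "xs \<noteq> []" by fact
  next
    fix i assume "i < nedges xs"
    thus "edir xs i \<noteq> 0" using D ed unfolding dcc_path_def nA by force
  next
    fix j assume j: "0 < j \<and> j < nedges xs"
    thus "dir_angle (edir xs (j - 1)) (edir xs j) \<le> \<theta>" using D ed[of j] ed[of "j - 1"] unfolding dcc_path_def nA by auto
  next
    fix i assume i: "Suc i < nedges xs"
    thus "\<not> (short_edge l xs i \<and> short_edge l xs (Suc i))" using D sh[of i] sh[of "Suc i"] unfolding dcc_path_def nA by auto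
  next
    fix i assume as: "short_edge l xs i \<and> non_inflection_edge xs i"
    hence k: "0 < i" "Suc i < nedges xs" unfolding non_inflection_edge_def has_both_neighbours_def by auto
    have "dir_angle (edir A (i - 1)) (edir A (Suc i)) \<le> \<theta>"
      using D as ninfl sh[of i] k unfolding dcc_path_def by auto
    thus "dir_angle (edir xs (i - 1)) (edir xs (Suc i)) \<le> \<theta>" using ed[of "i - 1"] ed[of "Suc i"] k by simp
  qed
qed


lemma dcc_glue:
  assumes dL: "dcc_path \<theta> l (a # xs)" and dR: "dcc_path \<theta> l (xs @ [b])" and n3: "3 \<le> length xs"
  shows "dcc_path \<theta> l (a # xs @ [b])"
proof -
  define E where "E = a # xs @ [b]"
  define L where "L = a # xs"
  define R where "R = xs @ [b]"
  define n where "n = length xs"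
  have ne: "xs \<noteq> []" using n3 by auto
  have nE: "nedges E = Suc n" and nL: "nedges L = n" and nR: "nedges R = n"
    unfolding E_def L_def R_def n_def nedges_def by auto
  have EL: "E = L @ [b]" unfolding E_def L_def by simp
  have ER: "E = a # R" unfolding E_def R_def by simp
  have edL: "\<And>k. k < n \<Longrightarrow> edir E k = edir L k" unfolding EL by (rule edir_snoc) (simp add: L_def n_def)
  have edR: "\<And>k. edir E (Suc k) = edir R k" unfolding ER by (rule edir_cons_Suc)
  have DL: "dcc_path \<theta> l L" using dL unfolding L_def .
  have DR: "dcc_path \<theta> l R" using dR unfolding R_def .
  have shL: "\<And>k. k < n \<Longrightarrow> short_edge l E k \<longleftrightarrow> short_edge l L k" unfolding short_edge_def using edL by simp
  have shR: "\<And>k. short_edge l E (Suc k) \<longleftrightarrow> short_edge l R k" unfolding short_edge_def using edR by simp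
  show ?thesis unfolding E_def[symmetric] dcc_path_def
  proof (intro conjI allI impI)
    show "E \<noteq> []" unfolding E_def by simp
  next
    fix i assume "i < nedges E"
    hence i: "i < Suc n" unfolding nE .
    show "edir E i \<noteq> 0"
    proof (cases i)
      case 0
      have n0: "0 < n" using n3 unfolding n_def by linarith
      have "edir L 0 \<noteq> 0" using DL n0 unfolding dcc_path_def nL by auto
      thus ?thesis using edL[OF n0] 0 by simp
    next
      case (Suc k) thus ?thesis using edR[of k] DR i unfolding dcc_path_def nR by auto
    qed
  next
    fix j assume "0 < j \<and> j < nedges E"
    hence j: "0 < j" "j < Suc n" unfolding nE by auto
    show "dir_angle (edir E (j - 1)) (edir E j) \<le> \<theta>"
    proof (cases "j < n")
      case True thus ?thesis using edL[of j] edL[of "j - 1"] DL j unfolding dcc_path_def nL by auto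
    next
      case False
      hence jn: "j = n" using j by simp
      have sj: "Suc (n - 2) = j - 1" using jn n3 unfolding n_def by linarith
      have "edir E (j - 1) = edir R (n - 2)" using edR[of "n - 2"] unfolding sj .
      moreover have "edir E j = edir R (n - 1)"
      proof -
        have sj2: "Suc (n - 1) = j" using jn n3 unfolding n_def by linarith
        show ?thesis using edR[of "n - 1"] unfolding sj2 .
      qed
      moreover have "dir_angle (edir R (n - 1 - 1)) (edir R (n - 1)) \<le> \<theta>"
      proof -
        have "0 < n - 1 \<and> n - 1 < n" using n3 unfolding n_def by linarith
        thus ?thesis using DR unfolding dcc_path_def nR by blast
      qed
      moreover have "n - 1 - 1 = n - 2" by simp
      ultimately show ?thesis by simp
    qed
  next
    fix i assume "Suc i < nedges E"
    hence i: "Suc i < Suc n" unfolding nE .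
    show "\<not> (short_edge l E i \<and> short_edge l E (Suc i))"
    proof (cases "Suc i < n")
      case True thus ?thesis using shL[of i] shL[of "Suc i"] DL unfolding dcc_path_def nL by auto
    next
      case False
      hence iv: "i = n - 1" "0 < i" using i n3 unfolding n_def by auto
      have si: "Suc (i - 1) = i" using iv by simp
      have a: "short_edge l E i \<longleftrightarrow> short_edge l R (i - 1)" using shR[of "i - 1"] unfolding si .
      have "Suc (i - 1) < n" using iv by simp
      hence "\<not> (short_edge l R (i - 1) \<and> short_edge l R (Suc (i - 1)))" using DR unfolding dcc_path_def nR by blast
      thus ?thesis using a shR[of i] unfolding si by blast
    qed
  next
    fix i assume as: "short_edge l E i \<and> non_inflection_edge E i"
    hence hb: "0 < i" "Suc i < Suc n" unfolding non_inflection_edge_def has_both_neighbours_def nE by auto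
    show "dir_angle (edir E (i - 1)) (edir E (Suc i)) \<le> \<theta>"
    proof (cases "Suc i < n")
      case True
      have e: "edir E (i - 1) = edir L (i - 1)" "edir E i = edir L i" "edir E (Suc i) = edir L (Suc i)"
        using edL True by auto
      have "non_inflection_edge L i" using as True hb
        unfolding non_inflection_edge_def inflection_edge_def has_both_neighbours_def nE nL e by simp
      moreover have "short_edge l L i" using as shL[of i] True by simp
      ultimately show ?thesis using DL unfolding dcc_path_def e by blast
    next
      case False
      hence iv: "i = n - 1" using hb by simp
      define k where "k = i - 1"
      have ik: "i = Suc k" unfolding k_def using hb by simp
      have kn: "0 < k" "Suc k < n" using iv ik n3 unfolding n_def by auto
      have sk: "Suc (k - 1) = k" using kn by simp
      have e: "edir E (i - 1) = edir R (k - 1)" "edir E i = edir R k" "edir E (Suc i) = edir R (Suc k)"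
        using edR[of "k - 1"] edR[of k] edR[of "Suc k"] unfolding ik sk by simp_all
      have "non_inflection_edge R k" using as kn hb
        unfolding non_inflection_edge_def inflection_edge_def has_both_neighbours_def nE nR e by simp
      moreover have "short_edge l R k" using as shR[of k] unfolding ik by simp
      ultimately show ?thesis using DR unfolding dcc_path_def e by blast
    qed
  qed
qed




lemma pl_cons:
  assumes "xs \<noteq> []"
  shows "path_length (a # xs) = cmod (hd xs - a) + path_length xs"
proof -
  have n: "nedges (a # xs) = Suc (nedges xs)" using nedges_cons[OF assms] .
  have "path_length (a # xs) = (\<Sum>i<Suc (nedges xs). cmod (edir (a # xs) i))" unfolding path_length_def n ..
  also have "\<dots> = cmod (edir (a # xs) 0) + (\<Sum>i<nedges xs. cmod (edir (a # xs) (Suc i)))"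
    by (rule sum.lessThan_Suc_shift)
  also have "edir (a # xs) 0 = hd xs - a" using assms unfolding edir_def by (cases xs) auto
  finally show ?thesis unfolding edir_cons_Suc path_length_def .
qed

lemma pl_snoc:
  assumes "xs \<noteq> []"
  shows "path_length (xs @ [b]) = path_length xs + cmod (b - last xs)"
proof -
  have n: "nedges (xs @ [b]) = Suc (nedges xs)" using nedges_snoc[OF assms] .
  have "path_length (xs @ [b]) = (\<Sum>i<nedges xs. cmod (edir (xs @ [b]) i)) + cmod (edir (xs @ [b]) (nedges xs))"
    unfolding path_length_def n by (rule sum.lessThan_Suc)
  also have "(\<Sum>i<nedges xs. cmod (edir (xs @ [b]) i)) = path_length xs"
    unfolding path_length_def by (intro sum.cong) (auto simp: edir_snoc nedges_def)
  also have "edir (xs @ [b]) (nedges xs) = b - last xs"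
    using assms unfolding edir_def nedges_def by (simp add: nth_append last_conv_nth)
  finally show ?thesis .
qed

lemma move_next_ex:
  assumes dcc: "dcc_path \<theta> l xs" and th: "\<theta> \<le> pi/2"
   and infl: "inflection_edge xs p"
   and pre: "normal_edge l xs (Suc p) \<Longrightarrow> \<not> short_edge l xs p \<and>
        (Suc (Suc p) < nedges xs \<longrightarrow> \<not> short_edge l xs (Suc (Suc p)) \<and> inflection_edge xs (Suc p))"
  shows "\<exists>ys. dcc_path \<theta> l ys \<and> length ys = length xs \<and> (\<forall>i<length xs. i \<noteq> Suc p \<longrightarrow> ys!i = xs!i)
          \<and> path_length ys < path_length xs"
proof -
  obtain t where "dcc_path \<theta> l (slide xs (Suc p) t) \<and> path_length (slide xs (Suc p) t) < path_length xs"
    using move_next[OF dcc th infl pre] by blast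
  thus ?thesis using slide_nth[of _ "Suc p" xs t] by (intro exI[of _ "slide xs (Suc p) t"]) auto
qed

lemma move_prev:
  assumes dcc: "dcc_path \<theta> l xs" and th: "\<theta> \<le> pi/2"
   and infl: "inflection_edge xs q"
   and pre: "normal_edge l xs (q - 1) \<Longrightarrow> \<not> short_edge l xs q \<and>
        (0 < q - 1 \<longrightarrow> \<not> short_edge l xs (q - 2) \<and> inflection_edge xs (q - 1))"
  shows "\<exists>ys. dcc_path \<theta> l ys \<and> length ys = length xs \<and> (\<forall>i<length xs. i \<noteq> q \<longrightarrow> ys!i = xs!i)
          \<and> path_length ys < path_length xs"
proof -
  define m where "m = nedges xs"
  define rx where "rx = rev xs"
  define p' where "p' = m - Suc q"
  have q0: "0 < q" and qm: "Suc q < m" using infl unfolding inflection_edge_def has_both_neighbours_def m_def by auto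
  have len: "length xs = Suc m" using qm unfolding m_def nedges_def by simp
  have i1: "m - 1 - p' = q" unfolding p'_def using qm by simp
  have i2: "m - 1 - Suc p' = q - 1" unfolding p'_def using qm by simp
  have i3: "m - 1 - Suc (Suc p') = q - 2" unfolding p'_def using qm by simp
  have i4: "Suc (Suc p') < m \<longleftrightarrow> 0 < q - 1" unfolding p'_def using qm by auto
  have pm: "p' < m" "Suc p' < m" unfolding p'_def using qm q0 by auto
  have dr: "dcc_path \<theta> l rx" unfolding rx_def by (rule dcc_rev[OF dcc])
  have ir: "inflection_edge rx p'" unfolding rx_def using rev_infl[of p' xs] pm infl i1 unfolding m_def by simp
  have prer: "normal_edge l rx (Suc p') \<Longrightarrow> \<not> short_edge l rx p' \<and>
        (Suc (Suc p') < nedges rx \<longrightarrow> \<not> short_edge l rx (Suc (Suc p')) \<and> inflection_edge rx (Suc p'))"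
  proof -
    assume a: "normal_edge l rx (Suc p')"
    have "normal_edge l xs (q - 1)" using a rev_props(2)[of "Suc p'" xs l] pm i2 unfolding rx_def m_def by simp
    note pq = pre[OF this]
    have "\<not> short_edge l rx p'" using pq rev_props(1)[of p' xs l] pm i1 unfolding rx_def m_def by simp
    moreover have "Suc (Suc p') < nedges rx \<longrightarrow> \<not> short_edge l rx (Suc (Suc p')) \<and> inflection_edge rx (Suc p')"
    proof
      assume b: "Suc (Suc p') < nedges rx"
      hence b': "Suc (Suc p') < m" unfolding rx_def m_def by simp
      hence "0 < q - 1" using i4 by simp
      thus "\<not> short_edge l rx (Suc (Suc p')) \<and> inflection_edge rx (Suc p')"
        using pq rev_props(1)[of "Suc (Suc p')" xs l] rev_infl[of "Suc p'" xs] b' pm i2 i3 unfolding rx_def m_def by simp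
    qed
    ultimately show ?thesis by blast
  qed
  obtain ys' where ys': "dcc_path \<theta> l ys'" "length ys' = length rx" "\<forall>i<length rx. i \<noteq> Suc p' \<longrightarrow> ys'!i = rx!i"
      "path_length ys' < path_length rx"
    using move_next_ex[OF dr th ir prer] by blast
  show ?thesis
  proof (intro exI[of _ "rev ys'"] conjI)
    show "dcc_path \<theta> l (rev ys')" by (rule dcc_rev[OF ys'(1)])
    show "length (rev ys') = length xs" using ys'(2) unfolding rx_def by simp
    show "path_length (rev ys') < path_length xs" using ys'(4) unfolding rx_def path_length_rev .
    show "\<forall>i<length xs. i \<noteq> q \<longrightarrow> rev ys' ! i = xs ! i"
    proof (intro allI impI)
      fix i assume i: "i < length xs" "i \<noteq> q"
      have "rev ys' ! i = ys' ! (m - i)" using i ys'(2) len unfolding rx_def by (simp add: rev_nth)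
      also have "\<dots> = rx ! (m - i)" using ys'(3) i len unfolding rx_def p'_def using qm by auto
      also have "\<dots> = xs ! i" using i len unfolding rx_def by (simp add: rev_nth)
      finally show "rev ys' ! i = xs ! i" .
    qed
  qed
qed


lemma no_better:
  fixes P ys :: "complex list"
  assumes D: "discrete_dubins_path \<theta> l u U v V P"
    and n3: "3 \<le> length P"
    and dy: "dcc_path \<theta> l ys" and ly: "length ys = length (extended_path P U V)"
    and ey: "\<forall>i<length ys. i \<noteq> k \<longrightarrow> ys ! i = extended_path P U V ! i"
    and k2: "2 \<le> k" and kn: "k \<le> length P - 1"
    and lt: "path_length ys < path_length (extended_path P U V)"
  shows False
proof -
  define n where "n = length P"
  define E where "E = extended_path P U V"
  have Pne: "P \<noteq> []" using n3 by auto
  have dP: "dcc_path \<theta> l P" and st: "starts_at \<theta> l P u U" and en: "ends_at \<theta> l P v V"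
    and mn: "\<And>Q. dcc_path \<theta> l Q \<and> starts_at \<theta> l Q u U \<and> ends_at \<theta> l Q v V \<Longrightarrow> path_length P \<le> path_length Q"
    using D unfolding discrete_dubins_path_def by auto
  have hu: "hd P = u" using st unfolding starts_at_def by simp
  have lv: "last P = v" using en unfolding ends_at_def by simp
  have Ed: "E = (u - U) # P @ [v + V]" unfolding E_def extended_path_def hu lv ..
  have lE: "length E = n + 2" unfolding Ed n_def by simp
  have E0: "E ! 0 = u - U" unfolding Ed by simp
  have E1: "E ! 1 = u" unfolding Ed using Pne hu by (cases P) auto
  have En: "E ! n = v" unfolding Ed n_def using Pne lv by (simp add: nth_append last_conv_nth)
  have En1: "E ! Suc n = v + V" unfolding Ed n_def by (simp add: nth_append)
  have ly': "length ys = n + 2" using ly lE unfolding E_def by simp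
  have y0: "ys ! 0 = u - U" using ey ly' k2 E0 unfolding E_def by auto
  have y1: "ys ! 1 = u" using ey ly' k2 E1 unfolding E_def by auto
  have yn: "ys ! n = v" using ey ly' kn n3 En unfolding E_def n_def by auto
  have yn1: "ys ! Suc n = v + V" using ey ly' kn n3 En1 unfolding E_def n_def by auto
  define Q where "Q = take n (tl ys)"
  have lQ: "length Q = n" unfolding Q_def using ly' by simp
  have Qne: "Q \<noteq> []" using lQ n3 unfolding n_def by auto
  have ysQ: "ys = (u - U) # Q @ [v + V]"
  proof (rule nth_equalityI)
    show "length ys = length ((u - U) # Q @ [v + V])" using ly' lQ by simp
  next
    fix i assume "i < length ys"
    hence i: "i < n + 2" using ly' by simp
    show "ys ! i = ((u - U) # Q @ [v + V]) ! i"
    proof (cases i)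
      case 0 thus ?thesis using y0 by simp
    next
      case (Suc j)
      show ?thesis
      proof (cases "j < n")
        case True
        have "Q ! j = tl ys ! j" unfolding Q_def using True by simp
        also have "\<dots> = ys ! Suc j" using ly' True by (simp add: nth_tl)
        finally show ?thesis using Suc True lQ by (simp add: nth_append)
      next
        case False
        hence "j = n" using i Suc by simp
        thus ?thesis using Suc yn1 lQ by (simp add: nth_append)
      qed
    qed
  qed
  have hQ: "hd Q = u" using y1 ysQ Qne by (cases Q) auto
  have lQv: "last Q = v"
  proof -
    have nn: "Suc (n - 1) = n" using n3 unfolding n_def by linarith
    have "((u - U) # Q @ [v + V]) ! Suc (n - 1) = (Q @ [v + V]) ! (n - 1)" by simp
    also have "\<dots> = Q ! (n - 1)" using lQ nn by (simp add: nth_append)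
    finally have "ys ! n = Q ! (n - 1)" unfolding ysQ nn .
    thus ?thesis using yn Qne lQ by (simp add: last_conv_nth)
  qed
  have d1: "dcc_path \<theta> l ((u - U) # Q)" using dcc_butlast[of \<theta> l "(u - U) # Q" "v + V"] dy unfolding ysQ by simp
  have d2: "dcc_path \<theta> l (Q @ [v + V])" using dcc_tl[of \<theta> l "u - U" "Q @ [v + V]"] dy unfolding ysQ by simp
  have d3: "dcc_path \<theta> l Q" using dcc_tl[OF d1 Qne] .
  have "path_length P \<le> path_length Q"
    using mn[of Q] d1 d2 d3 Qne hQ lQv unfolding starts_at_def ends_at_def by simp
  moreover have "path_length ys = cmod U + path_length Q + cmod V"
    unfolding ysQ using pl_cons[of "Q @ [v + V]" "u - U"] pl_snoc[OF Qne, of "v + V"] Qne hQ lQv by simp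
  moreover have "path_length E = cmod U + path_length P + cmod V"
    unfolding Ed using pl_cons[of "P @ [v + V]" "u - U"] pl_snoc[OF Pne, of "v + V"] Pne hu lv by simp
  ultimately show False using lt unfolding E_def by simp
qed




theorem lemma2:
  fixes \<theta> l :: real and u U v V :: complex and P :: "complex list"
  assumes "0 < \<theta>" and "\<theta> \<le> pi / 2" and "2 * pi / \<theta> \<in> \<int>" and "0 < l"
    and "norm U = l" and "norm V = l"
    and "discrete_dubins_path \<theta> l u U v V P"
    and "nonzero_turns (extended_path P U V)"
  shows "\<forall>i j. inflection_edge (extended_path P U V) i \<and> (j = i - 1 \<or> j = Suc i) \<and>
           0 < j \<and> Suc j < nedges (extended_path P U V) \<longrightarrow>
           normal_edge l (extended_path P U V) j \<and> non_inflection_edge (extended_path P U V) j"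
proof (intro allI impI)
  fix i j
  define E where "E = extended_path P U V"
  define n where "n = length P"
  assume H0: "inflection_edge (extended_path P U V) i \<and> (j = i - 1 \<or> j = Suc i) \<and>
           0 < j \<and> Suc j < nedges (extended_path P U V)"
  hence H: "inflection_edge E i" "j = i - 1 \<or> j = Suc i" "0 < j" "Suc j < nedges E" unfolding E_def by auto
  have th: "\<theta> \<le> pi/2" by fact
  have D: "discrete_dubins_path \<theta> l u U v V P" by fact
  have dP: "dcc_path \<theta> l P" and st: "starts_at \<theta> l P u U" and en: "ends_at \<theta> l P v V"
    using D unfolding discrete_dubins_path_def by auto
  have Pne: "P \<noteq> []" using dP unfolding dcc_path_def by simp
  have hu: "hd P = u" using st unfolding starts_at_def by simp
  have lv: "last P = v" using en unfolding ends_at_def by simp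
  have Ed: "E = (u - U) # P @ [v + V]" unfolding E_def extended_path_def hu lv ..
  have mE: "nedges E = Suc n" unfolding Ed n_def nedges_def by simp
  have hi: "0 < i" "Suc i < nedges E" using H(1) unfolding inflection_edge_def has_both_neighbours_def by auto
  have n3: "3 \<le> n" using H hi unfolding mE by auto
  have dE: "dcc_path \<theta> l E" unfolding Ed
    by (rule dcc_glue) (use st en n3 hu lv in \<open>auto simp: starts_at_def ends_at_def n_def\<close>)
  have e0: "edir E 0 = U" unfolding Ed edir_def using Pne hu by (cases P) auto
  have en': "edir E n = V" unfolding Ed edir_def n_def using Pne lv by (simp add: nth_append last_conv_nth)
  have ns0: "\<not> short_edge l E 0" unfolding short_edge_def e0 using assms(5) by simp
  have nsn: "\<not> short_edge l E n" unfolding short_edge_def en' using assms(6) by simp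
  have hbj: "has_both_neighbours E j" unfolding has_both_neighbours_def using H by simp
  have lenE: "length E = n + 2" unfolding Ed n_def by simp
  show "normal_edge l (extended_path P U V) j \<and> non_inflection_edge (extended_path P U V) j"
    unfolding E_def[symmetric]
  proof (rule ccontr)
    assume neg: "\<not> (normal_edge l E j \<and> non_inflection_edge E j)"
    hence neg': "\<not> normal_edge l E j \<or> inflection_edge E j" using hbj unfolding non_inflection_edge_def by auto
    define GG where "GG = (\<exists>ys k. dcc_path \<theta> l ys \<and> length ys = length E \<and> (\<forall>i<length E. i \<noteq> k \<longrightarrow> ys!i = E!i)
        \<and> path_length ys < path_length E \<and> 2 \<le> k \<and> k \<le> n - 1)"
    have ex: GG
    proof -
      have NX: "\<And>p. inflection_edge E p \<Longrightarrow> (normal_edge l E (Suc p) \<Longrightarrow> \<not> short_edge l E p \<and>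
        (Suc (Suc p) < nedges E \<longrightarrow> \<not> short_edge l E (Suc (Suc p)) \<and> inflection_edge E (Suc p))) \<Longrightarrow>
        2 \<le> Suc p \<Longrightarrow> Suc p \<le> n - 1 \<Longrightarrow> GG"
      proof -
        fix p assume a: "inflection_edge E p" "normal_edge l E (Suc p) \<Longrightarrow> \<not> short_edge l E p \<and>
          (Suc (Suc p) < nedges E \<longrightarrow> \<not> short_edge l E (Suc (Suc p)) \<and> inflection_edge E (Suc p))"
          "2 \<le> Suc p" "Suc p \<le> n - 1"
        show GG unfolding GG_def using move_next_ex[OF dE th a(1,2)] a(3,4) by blast
      qed
      have PX: "\<And>q. inflection_edge E q \<Longrightarrow> (normal_edge l E (q - 1) \<Longrightarrow> \<not> short_edge l E q \<and>
        (0 < q - 1 \<longrightarrow> \<not> short_edge l E (q - 2) \<and> inflection_edge E (q - 1))) \<Longrightarrow>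
        2 \<le> q \<Longrightarrow> q \<le> n - 1 \<Longrightarrow> GG"
      proof -
        fix q assume a: "inflection_edge E q" "normal_edge l E (q - 1) \<Longrightarrow> \<not> short_edge l E q \<and>
          (0 < q - 1 \<longrightarrow> \<not> short_edge l E (q - 2) \<and> inflection_edge E (q - 1))"
          "2 \<le> q" "q \<le> n - 1"
        show GG unfolding GG_def using move_prev[OF dE th a(1,2)] a(3,4) by blast
      qed
      have nsh: "\<And>k. normal_edge l E k \<Longrightarrow> \<not> short_edge l E k" unfolding normal_edge_def short_edge_def by simp
      from H(2) show ?thesis
      proof
        assume jd: "j = Suc i"
        have b1: "Suc (Suc i) \<le> n" using H(4) jd mE by simp
        show ?thesis
        proof (cases "normal_edge l E (Suc i)")
          case False
          show ?thesis by (rule NX[OF H(1)]) (use False hi b1 in auto)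
        next
          case True
          hence inj: "inflection_edge E (Suc i)" using neg' jd by simp
          show ?thesis
          proof (cases "normal_edge l E i \<and> short_edge l E (i - 1)")
            case False
            show ?thesis
              by (rule PX[OF inj]) (use False True inj H(1) nsh hi b1 in auto)
          next
            case c2: True
            show ?thesis
            proof (cases "short_edge l E (Suc (Suc i))")
              case False
              show ?thesis by (rule NX[OF H(1)]) (use False True inj c2 nsh hi b1 in auto)
            next
              case c3: True
              have "Suc (Suc i) \<noteq> n" using c3 nsn by auto
              hence b2: "Suc (Suc (Suc i)) \<le> n" using b1 by simp
              have "\<not> normal_edge l E (Suc (Suc i))" using c3 unfolding normal_edge_def short_edge_def by simp
              thus ?thesis by (intro NX[OF inj]) (use b2 in auto)
            qed
          qed
        qed
      next
        assume jd: "j = i - 1"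
        have i2: "2 \<le> i" using H(3) jd by simp
        have b1: "i \<le> n - 1" using hi mE by simp
        show ?thesis
        proof (cases "normal_edge l E (i - 1)")
          case False
          show ?thesis by (rule PX[OF H(1)]) (use False i2 b1 in auto)
        next
          case True
          hence inj: "inflection_edge E (i - 1)" using neg' jd by simp
          have si: "Suc (i - 1) = i" using i2 by simp
          show ?thesis
          proof (cases "normal_edge l E i \<and> short_edge l E (Suc i)")
            case False
            show ?thesis
              by (rule NX[OF inj, unfolded si]) (use False True H(1) nsh i2 b1 in auto)
          next
            case c2: True
            show ?thesis
            proof (cases "short_edge l E (i - 2)")
              case False
              show ?thesis by (rule PX[OF H(1)]) (use False True inj c2 nsh i2 b1 in auto)
            next
              case c3: True
              have "i - 2 \<noteq> 0" using c3 ns0 by auto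
              hence b2: "2 \<le> i - 1" by simp
              have "\<not> normal_edge l E (i - 1 - 1)" using c3 unfolding normal_edge_def short_edge_def
                by (simp add: numeral_2_eq_2)
              thus ?thesis by (intro PX[OF inj]) (use b2 b1 in auto)
            qed
          qed
        qed
      qed
    qed
    then obtain ys k where Y: "dcc_path \<theta> l ys" "length ys = length E" "\<forall>i<length E. i \<noteq> k \<longrightarrow> ys!i = E!i"
        "path_length ys < path_length E" "2 \<le> k" "k \<le> n - 1" unfolding GG_def by blast
    show False
      by (rule no_better[OF D _ Y(1) Y(2)[unfolded E_def] _ Y(5) _ Y(4)[unfolded E_def]])
         (use n3 Y(3) Y(2) Y(6) in \<open>auto simp: n_def E_def\<close>)
  qed
qed


end
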